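(* For every $n\ge1$, the coordinates $(p_j,u_j)$ of the trajectory $T_n$ satisfy: (a) $p_ju_j<1$ for $0\le j\le n$; (b) $p_j\ge1$ for $0\le j\le (n-1)/2$, and $u_j\ge1$ for $(n+1)/2\le j\le n$; (c) $u_j<1$ for $0\le j\le n/2$, and $p_j<1$ for $n/2\le j\le n$.
   Context: $\Phi$ is the partial map of $\mathbb{R}^2$ defined for $p\ne0$ by $\Phi(p,u)=\bigl(p^2(u+1)-1,\ 1/p\bigr)$. For $n\ge1$, the trajectory $T_n$ is the (existing and unique) finite sequence $(p_j,u_j)$, $j=0,\dots,n$, with $(p_j,u_j)=\Phi(p_{j-1},u_{j-1})$ for $1\le j\le n$, $u_0=0$, $p_n=0$, and $p_j>0$ for $0\le j\le n-1$. *)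

theory Defs
  imports Complex_Main
begin

text \<open>The partial map Phi(p,u) = (p^2 (u+1) - 1, 1/p), meaningful for p \<noteq> 0.\<close>
definition Phi :: "real \<times> real \<Rightarrow> real \<times> real" where
  "Phi pu = (let (p, u) = pu in (p^2 * (u + 1) - 1, 1 / p))"

definition is_trajectory :: "nat \<Rightarrow> (nat \<Rightarrow> real) \<Rightarrow> (nat \<Rightarrow> real) \<Rightarrow> bool" where
  "is_trajectory n p u \<longleftrightarrow>
     u 0 = 0 \<and> p n = 0 \<and>
     (\<forall>j<n. p j > 0) \<and>
     (\<forall>j. 1 \<le> j \<and> j \<le> n \<longrightarrow> p (j - 1) \<noteq> 0 \<and> (p j, u j) = Phi (p (j - 1), u (j - 1)))"

end

theory Submission
  imports Defs
begin

lemma traj_basic: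
  assumes "is_trajectory n p u"
  shows "u 0 = 0" "p n = 0" "\<And>j. j < n \<Longrightarrow> p j > 0"
    "\<And>j. j < n \<Longrightarrow> p (Suc j) = (p j)^2 * (u j + 1) - 1"
    "\<And>j. j < n \<Longrightarrow> u (Suc j) = 1 / p j"
proof -
  show "u 0 = 0" "p n = 0" "\<And>j. j < n \<Longrightarrow> p j > 0"
    using assms unfolding is_trajectory_def by auto
next
  fix j assume "j < n"
  then have "(p (Suc j), u (Suc j)) = Phi (p j, u j)"
    using assms unfolding is_trajectory_def
    by (metis Suc_leI diff_Suc_1 le_add1 plus_1_eq_Suc)
  then show "p (Suc j) = (p j)^2 * (u j + 1) - 1" "u (Suc j) = 1 / p j"
    by (auto simp: Phi_def)
qed

lemma h1: "a*b = 1 \<Longrightarrow> 0 < b \<Longrightarrow> b \<le> a \<Longrightarrow> 1 \<le> (a::real)"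
proof (rule ccontr)
  assume as: "a*b = 1" "0 < b" "b \<le> a" "\<not> 1 \<le> a"
  then have "a*b < 1*1" by (intro mult_strict_mono) auto
  then show False using as by simp
qed

lemma h2: "a*b = 1 \<Longrightarrow> 0 < a \<Longrightarrow> a \<le> b \<Longrightarrow> a \<le> (1::real)"
proof (rule ccontr)
  assume as: "a*b = 1" "0 < a" "a \<le> b" "\<not> a \<le> 1"
  then have "1*1 < a*b" by (intro mult_strict_mono) auto
  then show False using as by simp
qed

lemma h3: "a*b = 1 \<Longrightarrow> 0 < b \<Longrightarrow> b < a \<Longrightarrow> 1 < (a::real)"
  using h1[of a b] by (cases "a = 1") auto

lemma h4: "a*b = 1 \<Longrightarrow> 0 < a \<Longrightarrow> a < b \<Longrightarrow> a < (1::real)"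
  using h2[of a b] by (cases "a = 1") auto

lemma w_step:
  assumes "is_trajectory n p u" "j < n"
  shows "p (Suc j) * u (Suc j) = p j * u j + p j - 1 / p j"
proof -
  have pj: "p j > 0" using traj_basic(3)[OF assms(1)] assms(2) by auto
  show ?thesis unfolding traj_basic(4,5)[OF assms] using pj
    by (simp add: field_simps power2_eq_square)
qed

lemma p_step:
  assumes "is_trajectory n p u" "j < n"
  shows "p (Suc j) = (p (Suc j) * u (Suc j)) * p j"
proof -
  have pj: "p j > 0" using traj_basic(3)[OF assms(1)] assms(2) by auto
  show ?thesis using pj traj_basic(5)[OF assms] by simp
qed

lemma part_a:
  assumes T: "is_trajectory n p u" and jn: "j \<le> n"
  shows "p j * u j < 1"
proof (rule ccontr)
  assume "\<not> p j * u j < 1"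
  hence w1: "p j * u j \<ge> 1" by simp
  have j0: "j \<noteq> 0"
  proof
    assume "j = 0" then show False using w1 traj_basic(1)[OF T] by simp
  qed
  have jn': "j < n" using w1 traj_basic(2)[OF T] jn by (cases "j = n") auto
  have pj: "p j > 0" using traj_basic(3)[OF T] jn' by auto
  show False
  proof (cases "p j \<ge> 1")
    case True
    have hk: "p k * u k \<ge> 1 \<and> p k \<ge> 1" if "j \<le> k" "k \<le> n" for k
      using that
    proof (induction k rule: dec_induct)
      case base then show ?case using w1 True by simp
    next
      case (step m)
      have pm: "p m > 0" using step traj_basic(3)[OF T] by auto
      have "1 / p m \<le> 1" using step pm by simp
      moreover have "p (Suc m) * u (Suc m) = p m * u m + p m - 1 / p m"
        using w_step[OF T, of m] step by simp
      ultimately have ws: "p (Suc m) * u (Suc m) \<ge> 1" using step by linarith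
      have "p (Suc m) = (p (Suc m) * u (Suc m)) * p m" by (rule p_step[OF T]) (use step in simp)
      also have "\<dots> \<ge> 1 * 1" using ws step by (intro mult_mono) auto
      finally show ?case using ws by simp
    qed
    show False using hk[of n] jn' traj_basic(2)[OF T] by simp
  next
    case False
    have hk: "p k * u k \<ge> 1 \<and> p k < 1" if "k \<le> j" for k
      using that
    proof (induction k rule: inc_induct)
      case base then show ?case using w1 False by simp
    next
      case (step m)
      have mn: "m < n" using step jn' by simp
      have pm: "p m > 0" using mn traj_basic(3)[OF T] by auto
      have ps: "p (Suc m) \<ge> 0" using traj_basic(3)[OF T, of "Suc m"] traj_basic(2)[OF T]
        using mn by (cases "Suc m = n") auto
      have eq: "p (Suc m) = (p (Suc m) * u (Suc m)) * p m" using p_step[OF T mn] .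
      have "p m \<le> (p (Suc m) * u (Suc m)) * p m" using step pm
        by (simp add: mult_le_cancel_right1)
      hence pmlt: "p m < 1" using eq step by linarith
      have "p m * p m < 1 * 1" using pmlt pm by (intro mult_strict_mono) auto
      hence "p m < 1 / p m" using pm by (simp add: less_divide_eq)
      hence "p m * u m > 1" using w_step[OF T mn] step by linarith
      then show ?case using pmlt by simp
    qed
    show False using hk[of 0] traj_basic(1)[OF T] by simp
  qed
qed

lemma p_decr:
  assumes T: "is_trajectory n p u" and "i < k" "k \<le> n"
  shows "p k < p i"
  using assms(2,3)
proof (induction k rule: less_induct)
  case (less k)
  then obtain m where k: "k = Suc m" by (cases k) auto
  have mn: "m < n" using less k by simp
  have pm: "p m > 0" using mn traj_basic(3)[OF T] by auto
  have ps: "p (Suc m) \<ge> 0" using traj_basic(3)[OF T, of "Suc m"] traj_basic(2)[OF T]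
    using mn by (cases "Suc m = n") auto
  have eq: "p (Suc m) = (p (Suc m) * u (Suc m)) * p m" using p_step[OF T mn] .
  have w: "p (Suc m) * u (Suc m) < 1" using part_a[OF T] mn by simp
  have "(p (Suc m) * u (Suc m)) * p m < 1 * p m" using w pm by (intro mult_strict_right_mono) auto
  hence "p (Suc m) < p m" by (subst eq) simp
  then show ?case
  proof (cases "i = m")
    case True then show ?thesis using k \<open>p (Suc m) < p m\<close> by simp
  next
    case False
    hence "p m < p i" using less k by simp
    then show ?thesis using k \<open>p (Suc m) < p m\<close> by simp
  qed
qed

lemma reverse_traj:
  assumes T: "is_trajectory n p u" and n1: "n \<ge> 1"
  shows "is_trajectory n (\<lambda>k. u (n - k)) (\<lambda>k. p (n - k))"
  unfolding is_trajectory_def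
proof (intro conjI allI impI)
  show "p (n - 0) = 0" using traj_basic(2)[OF T] by simp
  show "u (n - n) = 0" using traj_basic(1)[OF T] by simp
next
  fix k assume k: "k < n"
  define i where "i = n - k - 1"
  have i: "n - k = Suc i" "i < n" using k i_def by auto
  show "u (n - k) > 0" using i traj_basic(5)[OF T, of i] traj_basic(3)[OF T, of i] by simp
next
  fix k assume k: "1 \<le> k \<and> k \<le> n"
  define i where "i = n - k"
  have i: "i < n" "n - (k - 1) = Suc i" using k i_def by auto
  have pi: "p i > 0" using i traj_basic(3)[OF T] by auto
  have us: "u (Suc i) = 1 / p i" using traj_basic(5)[OF T i(1)] .
  have ps: "p (Suc i) = (p i)^2 * (u i + 1) - 1" using traj_basic(4)[OF T i(1)] .
  show "u (n - (k - 1)) \<noteq> 0" using i us pi by simp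
  have "(u (n - k), p (n - k)) = Phi (u (Suc i), p (Suc i))"
    using pi unfolding Phi_def us ps i_def[symmetric]
    by (simp add: field_simps power2_eq_square)
  then show "(u (n - k), p (n - k)) = Phi (u (n - (k - 1)), p (n - (k - 1)))"
    using i by simp
qed

lemma compare:
  assumes T: "is_trajectory n p u" and T': "is_trajectory n p' u'" and n1: "n \<ge> 1"
    and lt: "p 0 < p' 0"
  shows False
proof -
  have hk: "p j < p' j \<and> p j * u j \<le> p' j * u' j" if "j \<le> n" for j
    using that
  proof (induction j)
    case 0 then show ?case using lt traj_basic(1)[OF T] traj_basic(1)[OF T'] by simp
  next
    case (Suc m)
    have mn: "m < n" using Suc by simp
    have pm: "p m > 0" using mn traj_basic(3)[OF T] by auto
    have IH: "p m < p' m" "p m * u m \<le> p' m * u' m" using Suc mn by auto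
    have "1 / p' m < 1 / p m" using pm IH(1)
      by (intro divide_strict_left_mono) auto
    hence "p m - 1 / p m < p' m - 1 / p' m" using IH(1) by linarith
    hence wl: "p (Suc m) * u (Suc m) < p' (Suc m) * u' (Suc m)"
      using w_step[OF T mn] w_step[OF T' mn] IH(2) by linarith
    have ps: "p (Suc m) \<ge> 0" using traj_basic(3)[OF T, of "Suc m"] traj_basic(2)[OF T]
      using mn by (cases "Suc m = n") auto
    have w0: "p (Suc m) * u (Suc m) \<ge> 0"
      using traj_basic(5)[OF T mn] pm ps by simp
    have "p (Suc m) = (p (Suc m) * u (Suc m)) * p m" using p_step[OF T mn] .
    also have "\<dots> \<le> (p (Suc m) * u (Suc m)) * p' m" using w0 IH(1)
      by (simp add: mult_left_mono)
    also have "\<dots> < (p' (Suc m) * u' (Suc m)) * p' m" using wl pm IH(1)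
      by (simp add: mult_strict_right_mono)
    also have "\<dots> = p' (Suc m)" by (rule p_step[OF T' mn, symmetric])
    finally show ?case using wl by simp
  qed
  show False using hk[of n] traj_basic(2)[OF T] traj_basic(2)[OF T'] by simp
qed

lemma uniq:
  assumes T: "is_trajectory n p u" and T': "is_trajectory n p' u'" and n1: "n \<ge> 1"
    and j: "j \<le> n"
  shows "p j = p' j \<and> u j = u' j"
proof -
  have p0: "p 0 = p' 0" using compare[OF T T' n1] compare[OF T' T n1] by fastforce
  show ?thesis using j
  proof (induction j)
    case 0 then show ?case using p0 traj_basic(1)[OF T] traj_basic(1)[OF T'] by simp
  next
    case (Suc m)
    then have mn: "m < n" by simp
    then show ?case using Suc traj_basic(4,5)[OF T mn] traj_basic(4,5)[OF T' mn] by simp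
  qed
qed

lemma prod1:
  assumes T: "is_trajectory n p u" and n1: "n \<ge> 1" and k: "k < n"
  shows "p k * p (n - 1 - k) = 1"
proof -
  have "u (n - (n - 1 - k)) = p (n - 1 - k)"
    using uniq[OF reverse_traj[OF T n1] T n1, of "n - 1 - k"] k by simp
  moreover have "n - (n - 1 - k) = Suc k" using k by simp
  moreover have "p k > 0" using k traj_basic(3)[OF T] by auto
  ultimately have "p (n - 1 - k) = 1 / p k" using traj_basic(5)[OF T k] by simp
  then show ?thesis using \<open>p k > 0\<close> by simp
qed

theorem lemma5:
  fixes n :: nat and p u :: "nat \<Rightarrow> real"
  assumes "n \<ge> 1" and "is_trajectory n p u"
  shows "(\<forall>j\<le>n. p j * u j < 1)
       \<and> (\<forall>j. real j \<le> (real n - 1) / 2 \<longrightarrow> p j \<ge> 1)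
       \<and> (\<forall>j\<le>n. (real n + 1) / 2 \<le> real j \<longrightarrow> u j \<ge> 1)
       \<and> (\<forall>j. real j \<le> real n / 2 \<longrightarrow> u j < 1)
       \<and> (\<forall>j\<le>n. real n / 2 \<le> real j \<longrightarrow> p j < 1)"
proof (intro conjI allI impI)
  note T = assms(2) and n1 = assms(1)
  have pos: "\<And>j. j < n \<Longrightarrow> p j > 0" using traj_basic(3)[OF T] by auto
  show "p j * u j < 1" if "j \<le> n" for j using part_a[OF T that] .
  show "p j \<ge> 1" if h: "real j \<le> (real n - 1) / 2" for j
  proof -
    have "real (2 * j + 1) \<le> real n" using h by simp
    hence "2 * j + 1 \<le> n" by (simp only: of_nat_le_iff)
    hence jn: "2 * j \<le> n - 1" by simp
    define k where "k = n - 1 - j"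
    have jlt: "j < n" using jn n1 by linarith
    have pr: "p j * p k = 1" unfolding k_def using prod1[OF T n1 jlt] .
    have "j \<le> k" "k < n" using jn jlt k_def by auto
    hence "p k \<le> p j" using p_decr[OF T, of j k] by (cases "j = k") auto
    moreover have "p k > 0" using pos \<open>k < n\<close> by blast
    ultimately show ?thesis using h1[OF pr] by simp
  qed
  show "u j \<ge> 1" if jn: "j \<le> n" and h: "(real n + 1) / 2 \<le> real j" for j
  proof -
    obtain i where i: "j = Suc i" using h by (cases j) auto
    have "real n \<le> real (2 * i + 1)" using h i by simp
    hence "n \<le> 2 * i + 1" by (simp only: of_nat_le_iff)
    hence jn': "n - 1 \<le> 2 * i" by simp
    define k where "k = n - 1 - i"
    have ilt: "i < n" using i jn by simp
    have pr: "p i * p k = 1" unfolding k_def using prod1[OF T n1 ilt] .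
    have "k \<le> i" using jn' k_def by simp
    hence "p i \<le> p k" using p_decr[OF T, of k i] ilt by (cases "i = k") auto
    moreover have "p i > 0" using pos ilt by blast
    ultimately have "p i \<le> 1" using h2[OF pr] by simp
    then show ?thesis using traj_basic(5)[OF T ilt] i \<open>p i > 0\<close> by simp
  qed
  show "u j < 1" if h: "real j \<le> real n / 2" for j
  proof (cases j)
    case 0 then show ?thesis using traj_basic(1)[OF T] by simp
  next
    case (Suc i)
    have "real (2 * i + 2) \<le> real n" using h Suc by simp
    hence jn': "2 * i + 2 \<le> n" by (simp only: of_nat_le_iff)
    define k where "k = n - 1 - i"
    have ilt: "i < n" using jn' by simp
    have pr: "p i * p k = 1" unfolding k_def using prod1[OF T n1 ilt] .
    have "i < k" "k < n" using jn' k_def by auto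
    hence "p k < p i" using p_decr[OF T, of i k] by simp
    moreover have "p k > 0" using pos \<open>k < n\<close> by blast
    ultimately have "p i > 1" using h3[OF pr] by simp
    moreover have "p i > 0" using pos ilt by blast
    ultimately show ?thesis using traj_basic(5)[OF T ilt] Suc by simp
  qed
  show "p j < 1" if jn: "j \<le> n" and h: "real n / 2 \<le> real j" for j
  proof (cases "j = n")
    case True then show ?thesis using traj_basic(2)[OF T] by simp
  next
    case False
    hence jlt: "j < n" using jn by simp
    have "real n \<le> real (2 * j)" using h by simp
    hence jn': "n \<le> 2 * j" by (simp only: of_nat_le_iff)
    define k where "k = n - 1 - j"
    have pr: "p j * p k = 1" unfolding k_def using prod1[OF T n1 jlt] .
    have "k < j" using jn' jlt k_def by simp
    hence "p j < p k" using p_decr[OF T, of k j] jlt by simp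
    moreover have "p j > 0" using pos jlt by blast
    ultimately show ?thesis using h4[OF pr] by simp
  qed
qed

end
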